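(* For $n=1,2,3,\dots$, $$[n]_{\mathbb{Z},\mathbb{N}}=\prod_{b=2}^n b^{\operatorname{ord}_b(n)},$$ where $\operatorname{ord}_b(n)$ is the largest $\alpha\in\mathbb{N}$ such that $b^\alpha\mid n$.
   Context: $\mathbb{N}=\{0,1,2,\dots\}$. For an integer $b\ge0$ and $a\in\mathbb{Z}$ define $\operatorname{ord}_b(a):=\sup\{k\in\mathbb{N}: a\mathbb{Z}\subseteq b^k\mathbb{Z}\}$ (convention $0^0=1$); thus for $b\ge2$ it is the largest $k$ with $b^k\mid a$ ($+\infty$ for $a=0$), $\operatorname{ord}_0(a)=+\infty$ if $a=0$ and $0$ otherwise, and $\operatorname{ord}_1(a)=+\infty$. For nonempty $S\subseteq\mathbb{Z}$, a $b$-ordering of $S$ is a sequence $(a_i)_{i\ge0}$ in $S$ such that for each $i\ge1$, $a_i$ attains $\min_{a'\in S}\sum_{j=0}^{i-1}\operatorname{ord}_b(a'-a_j)$; the $b$-exponent sequence is $\alpha_k(S,b):=\sum_{j=0}^{k-1}\operatorname{ord}_b(a_k-a_j)$ for any $b$-ordering (independent of the choice). For $\mathcal{T}\subseteq\mathbb{N}$ the generalized factorial is $k!_{S,\mathcal{T}}:=\prod_{b\in\mathcal{T}}b^{\alpha_k(S,b)}$, with conventions $b^{+\infty}=0$ for $b=0$ and $b\ge2$, $1^{+\infty}=1$, and $b^0=1$ for all $b\in\mathbb{N}$. The generalized integer is $[n]_{S,\mathcal{T}}:=n!_{S,\mathcal{T}}/(n-1)!_{S,\mathcal{T}}$ for $1\le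 n<|S|$. *)

theory Defs
  imports Main "HOL-Library.Extended_Nat" "HOL-Library.Groups_Big_Fun"
begin

definition ordb :: "nat \<Rightarrow> int \<Rightarrow> enat" where
  "ordb b a = Sup (enat ` {k. (int b) ^ k dvd a})"

definition is_b_ordering :: "int set \<Rightarrow> nat \<Rightarrow> (nat \<Rightarrow> int) \<Rightarrow> bool" where
  "is_b_ordering S b a \<longleftrightarrow> (\<forall>i. a i \<in> S) \<and>
     (\<forall>i\<ge>1. \<forall>a'\<in>S. (\<Sum>j<i. ordb b (a i - a j)) \<le> (\<Sum>j<i. ordb b (a' - a j)))"

definition alpha :: "int set \<Rightarrow> nat \<Rightarrow> nat \<Rightarrow> enat" where
  "alpha S b k = (let a = (SOME a. is_b_ordering S b a) in (\<Sum>j<k. ordb b (a k - a j)))"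

text \<open>b^e with the conventions b^\<infinity> = 0 for b = 0 and b \<ge> 2, 1^\<infinity> = 1, b^0 = 1.\<close>
definition epow :: "nat \<Rightarrow> enat \<Rightarrow> nat" where
  "epow b e = (case e of enat n \<Rightarrow> b ^ n | \<infinity> \<Rightarrow> (if b = 1 then 1 else 0))"

text \<open>Generalized factorial k!_{S,T} = prod_{b in T} b^(alpha_k(S,b)) (product of the
  finitely many factors different from 1).\<close>
definition gen_fact :: "int set \<Rightarrow> nat set \<Rightarrow> nat \<Rightarrow> nat" where
  "gen_fact S T k = (\<Prod>b. (if b \<in> T then epow b (alpha S b k) else 1))"

definition gen_int :: "int set \<Rightarrow> nat set \<Rightarrow> nat \<Rightarrow> rat" where
  "gen_int S T n = of_nat (gen_fact S T n) / of_nat (gen_fact S T (n - 1))"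

end

theory Submission
  imports Defs
begin


lemma ordb_zero: "ordb b 0 = \<infinity>"
proof -
  have "{k. (int b) ^ k dvd 0} = UNIV" by auto
  then show ?thesis unfolding ordb_def by (simp add: Sup_enat_def finite_image_iff[of enat] inj_on_def)
qed

lemma ordb_0: "d \<noteq> 0 \<Longrightarrow> ordb 0 d = 0"
proof -
  assume d: "d \<noteq> 0"
  have "{k. (int 0) ^ k dvd d} = {0}" using d by (auto simp: zero_power)
  then show ?thesis unfolding ordb_def by (simp add: zero_enat_def)
qed

lemma pow_bound:
  assumes b: "b \<ge> 2" and d: "d \<noteq> 0" and dv: "(int b)^t dvd d"
  shows "t < nat \<bar>d\<bar>"
proof -
  have "\<bar>(int b)^t\<bar> \<le> \<bar>d\<bar>" using dvd_imp_le_int[OF d dv] .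
  moreover have "t < b^t"
  proof -
    have "t < 2^t" by (rule less_exp)
    also have "(2::nat)^t \<le> b^t" using b by (intro power_mono) auto
    finally show ?thesis .
  qed
  then have "int t < \<bar>(int b)^t\<bar>" by simp
  ultimately show ?thesis by linarith
qed

lemma ordb_nz:
  assumes b: "b \<ge> 2" and d: "d \<noteq> 0"
  shows "ordb b d = enat (card {t. 1 \<le> t \<and> (int b)^t dvd d})"
proof -
  define K where "K = {k. (int b) ^ k dvd d}"
  have fin: "finite K" unfolding K_def
    by (rule finite_subset[of _ "{..<nat \<bar>d\<bar>}"]) (use pow_bound[OF b d] in auto)
  have "0 \<in> K" unfolding K_def by simp
  define M where "M = Max K"
  have MK: "M \<in> K" unfolding M_def using fin \<open>0 \<in> K\<close> by (intro Max_in) auto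
  have leM: "k \<in> K \<Longrightarrow> k \<le> M" for k unfolding M_def using fin by auto
  have "ordb b d = enat M"
    unfolding ordb_def K_def[symmetric]
    by (rule cSup_eq_maximum) (use MK leM in auto)
  moreover have "{t. 1 \<le> t \<and> (int b)^t dvd d} = {1..M}"
  proof safe
    fix t assume "1 \<le> t" "(int b)^t dvd d" then show "t \<in> {1..M}" using leM K_def by auto
  next
    fix t assume "t \<in> {1..M}"
    then have "(int b)^t dvd (int b)^M" by (simp add: le_imp_power_dvd)
    with MK show "(int b)^t dvd d" unfolding K_def by auto
    show "1 \<le> t" using \<open>t \<in> {1..M}\<close> by simp
  qed
  ultimately show ?thesis by simp
qed



definition cnt :: "nat \<Rightarrow> (nat \<Rightarrow> int) \<Rightarrow> nat \<Rightarrow> nat \<Rightarrow> int \<Rightarrow> nat" where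
  "cnt b a k t x = (\<Sum>j<k. if (int b)^t dvd (x - a j) then 1 else 0)"

definition Sk :: "nat \<Rightarrow> nat \<Rightarrow> nat" where
  "Sk b k = (\<Sum>t\<in>{1..k}. k div b^t)"

definition V :: "nat \<Rightarrow> (nat \<Rightarrow> int) \<Rightarrow> nat \<Rightarrow> int \<Rightarrow> enat" where
  "V b a k x = (\<Sum>j<k. ordb b (x - a j))"

definition inv :: "nat \<Rightarrow> (nat \<Rightarrow> int) \<Rightarrow> nat \<Rightarrow> bool" where
  "inv b a k \<longleftrightarrow> (\<forall>t x. k div b^t \<le> cnt b a k t x \<and> cnt b a k t x \<le> k div b^t + 1)"

lemma cnt_mono: "s \<le> t \<Longrightarrow> cnt b a k t x \<le> cnt b a k s x"
  unfolding cnt_def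
  by (intro sum_mono) (auto intro: dvd_trans[OF le_imp_power_dvd])

lemma cnt_0: "cnt b a k 0 x = k"
  unfolding cnt_def by simp

lemma cnt_class: "(int b)^t dvd (x - y) \<Longrightarrow> cnt b a k t x = cnt b a k t y"
  unfolding cnt_def
proof (intro sum.cong refl)
  fix j assume "(int b)^t dvd (x - y)"
  then have "(int b)^t dvd (x - a j) \<longleftrightarrow> (int b)^t dvd (y - a j)"
    by (metis dvd_add_right_iff diff_add_cancel add_diff_eq diff_diff_eq2 dvd_diff)
  then show "(if (int b)^t dvd (x - a j) then 1 else 0) = (if (int b)^t dvd (y - a j) then (1::nat) else 0)"
    by simp
qed

lemma cnt_Suc: "cnt b a (Suc k) t x = cnt b a k t x + (if (int b)^t dvd (x - a k) then 1 else 0)"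
  unfolding cnt_def by simp

lemma cnt_sum_classes:
  assumes "b \<ge> 1"
  shows "(\<Sum>c\<in>{0..<(int b)^t}. cnt b a k t c) = k"
proof -
  let ?B = "(int b)^t"
  have Bpos: "?B > 0" using assms by simp
  have inner: "(\<Sum>c\<in>{0..<?B}. (if ?B dvd (c - a j) then 1 else 0)) = (1::nat)" for j
  proof -
    have "(\<Sum>c\<in>{0..<?B}. (if ?B dvd (c - a j) then 1 else 0)) = (\<Sum>c\<in>{0..<?B}. (if c = a j mod ?B then 1 else (0::nat)))"
    proof (intro sum.cong refl)
      fix c assume c: "c \<in> {0..<?B}"
      then have "c mod ?B = c" by simp
      then have "?B dvd (c - a j) \<longleftrightarrow> c = a j mod ?B"
        by (metis mod_eq_dvd_iff)
      then show "(if ?B dvd (c - a j) then 1 else 0) = (if c = a j mod ?B then 1 else (0::nat))" by simp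
    qed
    also have "\<dots> = 1" using Bpos by (simp add: sum.delta')
    finally show ?thesis .
  qed
  have "(\<Sum>c\<in>{0..<?B}. cnt b a k t c) = (\<Sum>j<k. \<Sum>c\<in>{0..<?B}. (if ?B dvd (c - a j) then 1 else 0))"
    unfolding cnt_def by (rule sum.swap)
  also have "\<dots> = k" using inner by simp
  finally show ?thesis .
qed

lemma split_ind:
  assumes b: "b \<ge> 1" and m: "m \<noteq> (0::int)"
  shows "(\<Sum>i<b. (if m * int b dvd (y + int i * m) then 1 else 0)) = (if m dvd y then 1 else (0::nat))"
proof (cases "m dvd y")
  case False
  have "\<not> m * int b dvd (y + int i * m)" for i
  proof
    assume "m * int b dvd (y + int i * m)"
    then have "m dvd (y + int i * m)" using dvd_mult_left by blast
    then have "m dvd y" by (simp add: dvd_add_left_iff)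
    with False show False by simp
  qed
  then show ?thesis using False by simp
next
  case True
  then obtain z where z: "y = m * z" by auto
  have "(\<Sum>i<b. (if m * int b dvd (y + int i * m) then 1 else 0)) = (\<Sum>i<b. (if i = nat ((- z) mod int b) then 1 else (0::nat)))"
  proof (intro sum.cong refl)
    fix i assume i: "i \<in> {..<b}"
    have "m * int b dvd (y + int i * m) \<longleftrightarrow> int b dvd (z + int i)"
    proof -
      have "y + int i * m = m * (z + int i)" by (simp add: z algebra_simps)
      then show ?thesis using m by (simp add: dvd_times_left_cancel_iff)
    qed
    also have "\<dots> \<longleftrightarrow> int i mod int b = (- z) mod int b"
      by (metis diff_minus_eq_add mod_eq_dvd_iff add.commute)
    also have "\<dots> \<longleftrightarrow> i = nat ((- z) mod int b)"
      using i b by (auto simp: nat_mod_as_int)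
    finally show "(if m * int b dvd (y + int i * m) then 1 else 0) = (if i = nat ((- z) mod int b) then 1 else (0::nat))" by simp
  qed
  also have "\<dots> = 1"
  proof -
    have "nat ((- z) mod int b) < b" using b by (simp add: nat_less_iff)
    then show ?thesis by (simp add: sum.delta')
  qed
  finally show ?thesis using True by simp
qed

lemma cnt_split:
  assumes b: "b \<ge> 1"
  shows "(\<Sum>i<b. cnt b a k (Suc T) (x + int i * (int b)^T)) = cnt b a k T x"
proof -
  have m: "(int b)^T \<noteq> 0" using b by simp
  have "(\<Sum>i<b. cnt b a k (Suc T) (x + int i * (int b)^T))
     = (\<Sum>j<k. \<Sum>i<b. (if (int b)^T * int b dvd ((x - a j) + int i * (int b)^T) then 1 else 0))"
    unfolding cnt_def by (subst sum.swap) (simp add: algebra_simps power_Suc)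
  also have "\<dots> = cnt b a k T x"
    unfolding cnt_def using split_ind[OF b m] by simp
  finally show ?thesis .
qed



lemma t_less_pow: "b \<ge> 2 \<Longrightarrow> t < (b::nat)^t"
proof -
  assume b: "b \<ge> 2"
  have "t < 2^t" by (rule less_exp)
  also have "(2::nat)^t \<le> b^t" using b by (intro power_mono) auto
  finally show ?thesis .
qed

lemma card_filter_sum: "finite A \<Longrightarrow> card {t\<in>A. P t} = (\<Sum>t\<in>A. if P t then 1 else (0::nat))"
  proof -
  have "{t\<in>A. P t} = A \<inter> {t. P t}" by auto
  then show "finite A \<Longrightarrow> card {t\<in>A. P t} = (\<Sum>t\<in>A. if P t then 1 else (0::nat))"
    by (simp add: sum.If_cases)
qed

lemma V_eq:
  assumes b: "b \<ge> 2" and nx: "\<forall>j<k. x \<noteq> a j" and N: "\<forall>j<k. nat \<bar>x - a j\<bar> \<le> N"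
  shows "V b a k x = enat (\<Sum>t\<in>{1..N}. cnt b a k t x)"
proof -
  have trm: "ordb b (x - a j) = enat (\<Sum>t\<in>{1..N}. if (int b)^t dvd (x - a j) then 1 else 0)" if j: "j < k" for j
  proof -
    have d: "x - a j \<noteq> 0" using nx j by auto
    have "{t. 1 \<le> t \<and> (int b)^t dvd (x - a j)} = {t\<in>{1..N}. (int b)^t dvd (x - a j)}"
      using pow_bound[OF b d] N j by fastforce
    then show ?thesis using ordb_nz[OF b d] card_filter_sum[of "{1..N}"] by simp
  qed
  have "V b a k x = (\<Sum>j<k. enat (\<Sum>t\<in>{1..N}. if (int b)^t dvd (x - a j) then 1 else 0))"
    unfolding V_def by (intro sum.cong refl) (simp add: trm)
  also have "\<dots> = enat (\<Sum>j<k. \<Sum>t\<in>{1..N}. if (int b)^t dvd (x - a j) then 1 else 0)"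
    by (simp add: of_nat_eq_enat[symmetric])
  also have "(\<Sum>j<k. \<Sum>t\<in>{1..N}. if (int b)^t dvd (x - a j) then 1 else (0::nat)) = (\<Sum>t\<in>{1..N}. cnt b a k t x)"
    unfolding cnt_def by (rule sum.swap)
  finally show ?thesis .
qed

lemma V_inf:
  assumes "j < k" "x = a j"
  shows "V b a k x = \<infinity>"
proof -
  have "V b a k x = ordb b (x - a j) + (\<Sum>i\<in>{..<k} - {j}. ordb b (x - a i))"
    unfolding V_def by (rule sum.remove) (use assms in auto)
  then show ?thesis using assms by (simp add: ordb_zero)
qed

lemma cnt_pos:
  assumes "j < k" "(int b)^t dvd (x - a j)"
  shows "cnt b a k t x \<ge> 1"
proof -
  have "cnt b a k t x = (if (int b)^t dvd (x - a j) then 1 else 0) + (\<Sum>i\<in>{..<k} - {j}. if (int b)^t dvd (x - a i) then 1 else (0::nat))"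
    unfolding cnt_def by (rule sum.remove) (use assms in auto)
  then show ?thesis using assms by simp
qed

lemma Sk_ext:
  assumes b: "b \<ge> 2" and N: "N \<ge> k"
  shows "(\<Sum>t\<in>{1..N}. k div b^t) = Sk b k"
proof -
  have "(\<Sum>t\<in>{1..N}. k div b^t) = (\<Sum>t\<in>{1..k}. k div b^t)"
  proof (rule sum.mono_neutral_right)
    show "finite {1..N}" by simp
    show "{1..k} \<subseteq> {1..N}" using N by auto
    show "\<forall>t\<in>{1..N} - {1..k}. k div b ^ t = 0"
    proof
      fix t assume "t \<in> {1..N} - {1..k}"
      then have "k < t" by auto
      with t_less_pow[OF b, of t] show "k div b ^ t = 0" by simp
    qed
  qed
  then show ?thesis unfolding Sk_def by simp
qed

lemma exist_cls:
  assumes b: "b \<ge> 2" and I: "inv b a k"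
  shows "\<exists>x. \<forall>t\<le>T. cnt b a k t x = k div b^t"
proof (induction T)
  case 0
  show ?case by (auto simp: cnt_0)
next
  case (Suc T)
  then obtain x where x: "\<forall>t\<le>T. cnt b a k t x = k div b^t" by blast
  define q where "q = k div b^(Suc T)"
  have "\<exists>i<b. cnt b a k (Suc T) (x + int i * (int b)^T) \<le> q"
  proof (rule ccontr)
    assume "\<not> ?thesis"
    then have "\<forall>i\<in>{..<b}. q + 1 \<le> cnt b a k (Suc T) (x + int i * (int b)^T)" by auto
    then have "of_nat (card {..<b}) * (q+1) \<le> (\<Sum>i<b. cnt b a k (Suc T) (x + int i * (int b)^T))"
      by (intro sum_bounded_below) auto
    also have "\<dots> = cnt b a k T x" using cnt_split[of b] b by simp
    also have "\<dots> = k div b^T" using x by simp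
    finally have le: "b * (q+1) \<le> k div b^T" by simp
    have "q = k div b^T div b" unfolding q_def by (simp only: power_Suc2 div_mult2_eq)
    then have e: "k div b^T = b * q + k div b^T mod b" by simp
    have m: "k div b^T mod b < b" using b by simp
    have d: "b * (q+1) = b * q + b" by simp
    from e m d have "k div b^T < b * (q+1)" by linarith
    with le show False by simp
  qed
  then obtain i where i: "i < b" "cnt b a k (Suc T) (x + int i * (int b)^T) \<le> q" by blast
  define x' where "x' = x + int i * (int b)^T"
  have "\<forall>t\<le>Suc T. cnt b a k t x' = k div b^t"
  proof (intro allI impI)
    fix t assume t: "t \<le> Suc T"
    show "cnt b a k t x' = k div b^t"
    proof (cases "t = Suc T")
      case True
      have "k div b^(Suc T) \<le> cnt b a k (Suc T) x'" using I unfolding inv_def by blast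
      then show ?thesis using i True unfolding x'_def q_def by simp
    next
      case False
      then have tT: "t \<le> T" using t by simp
      have "(int b)^t dvd (x' - x)" unfolding x'_def using tT
        by (simp add: le_imp_power_dvd)
      then have "cnt b a k t x' = cnt b a k t x" by (rule cnt_class)
      then show ?thesis using x tT by simp
    qed
  qed
  then show ?case by blast
qed



lemma V_lower:
  assumes b: "b \<ge> 2" and I: "inv b a k"
  shows "enat (Sk b k) \<le> V b a k x"
proof (cases "\<exists>j<k. x = a j")
  case True
  then obtain j where "j < k" "x = a j" by blast
  then show ?thesis using V_inf by simp
next
  case False
  define N where "N = Suc (k + (\<Sum>j<k. nat \<bar>x - a j\<bar>))"
  have N: "\<forall>j<k. nat \<bar>x - a j\<bar> \<le> N"
  proof (intro allI impI)
    fix j assume "j < k"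
    then have "nat \<bar>x - a j\<bar> \<le> (\<Sum>j<k. nat \<bar>x - a j\<bar>)"
      by (intro member_le_sum) auto
    then show "nat \<bar>x - a j\<bar> \<le> N" unfolding N_def by simp
  qed
  have "V b a k x = enat (\<Sum>t\<in>{1..N}. cnt b a k t x)"
    using V_eq[OF b _ N] False by blast
  moreover have "(\<Sum>t\<in>{1..N}. k div b^t) \<le> (\<Sum>t\<in>{1..N}. cnt b a k t x)"
    using I unfolding inv_def by (intro sum_mono) blast
  moreover have "(\<Sum>t\<in>{1..N}. k div b^t) = Sk b k"
    by (rule Sk_ext[OF b]) (simp add: N_def)
  ultimately show ?thesis by simp
qed

lemma V_attained:
  assumes b: "b \<ge> 2" and I: "inv b a k"
  shows "\<exists>x. V b a k x = enat (Sk b k)"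
proof -
  obtain x where x: "\<forall>t\<le>k. cnt b a k t x = k div b^t" using exist_cls[OF b I] by blast
  have ck: "cnt b a k k x = 0" using x t_less_pow[OF b, of k] by simp
  have nx: "\<forall>j<k. x \<noteq> a j"
  proof (intro allI impI notI)
    fix j assume "j < k" "x = a j"
    then have "cnt b a k k x \<ge> 1" by (intro cnt_pos[of j]) auto
    with ck show False by simp
  qed
  define N where "N = Suc (k + (\<Sum>j<k. nat \<bar>x - a j\<bar>))"
  have N: "\<forall>j<k. nat \<bar>x - a j\<bar> \<le> N"
  proof (intro allI impI)
    fix j assume "j < k"
    then have "nat \<bar>x - a j\<bar> \<le> (\<Sum>j<k. nat \<bar>x - a j\<bar>)"
      by (intro member_le_sum) auto
    then show "nat \<bar>x - a j\<bar> \<le> N" unfolding N_def by simp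
  qed
  have "V b a k x = enat (\<Sum>t\<in>{1..N}. cnt b a k t x)"
    using V_eq[OF b nx N] by blast
  also have "(\<Sum>t\<in>{1..N}. cnt b a k t x) = (\<Sum>t\<in>{1..N}. k div b^t)"
  proof (intro sum.cong refl)
    fix t assume "t \<in> {1..N}"
    show "cnt b a k t x = k div b^t"
    proof (cases "t \<le> k")
      case True then show ?thesis using x by simp
    next
      case False
      then have "cnt b a k t x \<le> cnt b a k k x" by (intro cnt_mono) simp
      moreover have "k div b^t = 0" using False t_less_pow[OF b, of t] by simp
      ultimately show ?thesis using ck by simp
    qed
  qed
  also have "\<dots> = Sk b k" by (rule Sk_ext[OF b]) (simp add: N_def)
  finally show ?thesis by blast
qed

lemma div_Suc_le: "(m::nat) > 0 \<Longrightarrow> Suc k div m \<le> k div m + 1"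
proof -
  assume m: "m > 0"
  have "Suc k div m \<le> (k + m) div m" using m by (intro div_le_mono) simp
  also have "\<dots> = k div m + 1" using m by simp
  finally show ?thesis .
qed

lemma div_Suc_step:
  assumes "(m::nat) > 0" "Suc k div m = k div m + 1"
  shows "Suc k = m * (k div m + 1)"
proof -
  have e1: "Suc k = m * (Suc k div m) + Suc k mod m" by simp
  have e0: "k = m * (k div m) + k mod m" by simp
  have "k mod m < m" using assms by simp
  have "Suc k mod m = 0"
  proof -
    have "m * (Suc k div m) = m * (k div m) + m" using assms(2) by simp
    with e1 e0 \<open>k mod m < m\<close> show ?thesis by linarith
  qed
  then show ?thesis using e1 assms(2) by simp
qed

lemma inv_step:
  assumes b: "b \<ge> 2" and I: "inv b a k" and opt: "\<forall>x. V b a k (a k) \<le> V b a k x"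
  shows "V b a k (a k) = enat (Sk b k)" and "inv b a (Suc k)"
proof -
  obtain x0 where "V b a k x0 = enat (Sk b k)" using V_attained[OF b I] by blast
  with opt V_lower[OF b I, of "a k"] show Vak: "V b a k (a k) = enat (Sk b k)"
    by (metis order_antisym order_trans)
  have nx: "\<forall>j<k. a k \<noteq> a j"
    using Vak V_inf by (metis enat.distinct(1))
  define N where "N = Suc (k + (\<Sum>j<k. nat \<bar>a k - a j\<bar>))"
  have N: "\<forall>j<k. nat \<bar>a k - a j\<bar> \<le> N"
  proof (intro allI impI)
    fix j assume "j < k"
    then have "nat \<bar>a k - a j\<bar> \<le> (\<Sum>j<k. nat \<bar>a k - a j\<bar>)"
      by (intro member_le_sum) auto
    then show "nat \<bar>a k - a j\<bar> \<le> N" unfolding N_def by simp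
  qed
  have "enat (\<Sum>t\<in>{1..N}. cnt b a k t (a k)) = enat (\<Sum>t\<in>{1..N}. k div b^t)"
    using V_eq[OF b nx N] Vak Sk_ext[OF b, of k N] by (simp add: N_def)
  then have sumeq: "(\<Sum>t\<in>{1..N}. cnt b a k t (a k)) = (\<Sum>t\<in>{1..N}. k div b^t)" by simp
  have inN: "cnt b a k t (a k) = k div b^t" if t: "t \<in> {1..N}" for t
  proof (rule ccontr)
    assume ne: "cnt b a k t (a k) \<noteq> k div b^t"
    have "(\<Sum>t\<in>{1..N}. k div b^t) < (\<Sum>t\<in>{1..N}. cnt b a k t (a k))"
    proof (rule sum_strict_mono_ex1)
      show "finite {1..N}" by simp
      show "\<forall>x\<in>{1..N}. k div b ^ x \<le> cnt b a k x (a k)" using I unfolding inv_def by blast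
      show "\<exists>x\<in>{1..N}. k div b ^ x < cnt b a k x (a k)"
      proof -
        have "k div b^t \<le> cnt b a k t (a k)" using I unfolding inv_def by blast
        with ne have "k div b^t < cnt b a k t (a k)" by simp
        with t show ?thesis by blast
      qed
    qed
    with sumeq show False by simp
  qed
  have E: "cnt b a k t (a k) = k div b^t" for t
  proof -
    consider "t = 0" | "t \<in> {1..N}" | "t > N" by fastforce
    then show ?thesis
    proof cases
      case 1 then show ?thesis by (simp add: cnt_0)
    next
      case 2 then show ?thesis by (rule inN)
    next
      case 3
      then have "cnt b a k t (a k) \<le> cnt b a k N (a k)" by (intro cnt_mono) simp
      moreover have "cnt b a k N (a k) = k div b^N" using inN[of N] by (simp add: N_def)
      moreover have "k div b^N = 0" using t_less_pow[OF b, of N] by (simp add: N_def)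
      moreover have "k div b^t = 0" using t_less_pow[OF b, of t] 3 by (simp add: N_def)
      ultimately show ?thesis by simp
    qed
  qed
  show "inv b a (Suc k)"
    unfolding inv_def
  proof (intro allI)
    fix t x
    define B where "B = (int b)^t"
    define q where "q = k div b^t"
    have Bpos: "B > 0" "b^t > 0" using b by (simp_all add: B_def)
    have d1: "Suc k div b^t \<le> q + 1" unfolding q_def using div_Suc_le Bpos by blast
    have d2: "q \<le> Suc k div b^t" unfolding q_def by (simp add: div_le_mono)
    have Ix: "q \<le> cnt b a k t x" "cnt b a k t x \<le> q + 1" using I unfolding inv_def q_def by auto
    show "Suc k div b ^ t \<le> cnt b a (Suc k) t x \<and> cnt b a (Suc k) t x \<le> Suc k div b ^ t + 1"
    proof (cases "B dvd (x - a k)")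
      case True
      then have "cnt b a k t x = cnt b a k t (a k)" unfolding B_def by (rule cnt_class)
      then have "cnt b a (Suc k) t x = q + 1" using True E unfolding cnt_Suc B_def q_def by simp
      then show ?thesis using d1 d2 by simp
    next
      case False
      then have cx: "cnt b a (Suc k) t x = cnt b a k t x" unfolding cnt_Suc B_def by simp
      have "Suc k div b^t \<le> cnt b a k t x"
      proof (rule ccontr)
        assume "\<not> ?thesis"
        then have eqq: "Suc k div b^t = q + 1" and cq: "cnt b a k t x = q" using d1 Ix by auto
        have sk: "Suc k = b^t * (q + 1)" using div_Suc_step[OF Bpos(2)] eqq unfolding q_def by simp
        define cx where "cx = x mod B"
        define ck where "ck = a k mod B"
        have cxin: "cx \<in> {0..<B}" "ck \<in> {0..<B}" unfolding cx_def ck_def using Bpos by auto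
        have neq: "cx \<noteq> ck" unfolding cx_def ck_def using False by (simp add: mod_eq_dvd_iff)
        have "B dvd (x mod B - x)" using mod_eq_dvd_iff[of "x mod B" B x] by simp
        then have ccx: "cnt b a k t cx = q"
          using cq cnt_class[of b t cx x a k] unfolding cx_def B_def by simp
        have "B dvd (a k mod B - a k)" using mod_eq_dvd_iff[of "a k mod B" B "a k"] by simp
        then have cck: "cnt b a k t ck = q"
          using E[of t] cnt_class[of b t ck "a k" a k] unfolding ck_def B_def q_def by simp
        have "(\<Sum>c\<in>{0..<B}. cnt b a k t c + (if c = cx then 1 else 0) + (if c = ck then 1 else 0))
              \<le> (\<Sum>c\<in>{0..<B}. q + 1)"
        proof (intro sum_mono)
          fix c assume "c \<in> {0..<B}"
          have "cnt b a k t c \<le> q + 1" using I unfolding inv_def q_def by blast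
          then show "cnt b a k t c + (if c = cx then 1 else 0) + (if c = ck then 1 else 0) \<le> q + 1"
            using ccx cck neq by auto
        qed
        moreover have "(\<Sum>c\<in>{0..<B}. cnt b a k t c + (if c = cx then 1 else 0) + (if c = ck then 1 else 0))
              = k + 2"
          using cnt_sum_classes[of b a k t] b cxin unfolding B_def by (simp add: sum.distrib)
        moreover have "nat ((int b)^t) = b^t" by (metis nat_int of_nat_power)
        then have "(\<Sum>c\<in>{0..<B}. q + 1) = b^t * (q + 1)" unfolding B_def by simp
        ultimately show False using sk by simp
      qed
      then show ?thesis using cx Ix d2 by simp
    qed
  qed
qed



lemma ordering_inv:
  assumes b: "b \<ge> 2" and ord: "is_b_ordering UNIV b a"
  shows "inv b a k \<and> V b a k (a k) = enat (Sk b k)"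
proof -
  have opt: "\<forall>x. V b a k (a k) \<le> V b a k x" for k
  proof (cases "k = 0")
    case True then show ?thesis by (simp add: V_def)
  next
    case False
    then show ?thesis using ord unfolding is_b_ordering_def V_def by auto
  qed
  have I: "inv b a k" for k
  proof (induction k)
    case 0 then show ?case by (simp add: inv_def cnt_def)
  next
    case (Suc k) then show ?case using inv_step(2)[OF b _ opt] by blast
  qed
  show ?thesis using I inv_step(1)[OF b I opt] by blast
qed

lemma ex_min_enat: "\<exists>x. \<forall>y. (g :: int \<Rightarrow> enat) x \<le> g y"
proof -
  define m where "m = (LEAST v. v \<in> range g)"
  have "m \<in> range g" unfolding m_def by (rule LeastI_ex) blast
  then obtain x where "g x = m" by blast
  moreover have "\<forall>y. m \<le> g y" unfolding m_def by (auto intro: Least_le)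
  ultimately show ?thesis by metis
qed

definition chs :: "nat \<Rightarrow> (nat \<Rightarrow> int) \<Rightarrow> nat \<Rightarrow> int" where
  "chs b a k = (SOME x. \<forall>y. V b a k x \<le> V b a k y)"

primrec seqs :: "nat \<Rightarrow> nat \<Rightarrow> nat \<Rightarrow> int" where
  "seqs b 0 = (\<lambda>_. 0)"
| "seqs b (Suc k) = (seqs b k)(k := chs b (seqs b k) k)"

lemma seqs_stable: "j < m \<Longrightarrow> seqs b m j = seqs b (Suc j) j"
proof (induction m)
  case 0 then show ?case by simp
next
  case (Suc m)
  then show ?case by (cases "j = m") auto
qed

lemma V_cong: "(\<forall>j<k. a j = a' j) \<Longrightarrow> V b a k x = V b a' k x"
  unfolding V_def by (intro sum.cong) auto

lemma ordering_exists: "\<exists>a. is_b_ordering UNIV b a"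
proof -
  define a where "a k = seqs b (Suc k) k" for k
  have "is_b_ordering UNIV b a"
    unfolding is_b_ordering_def
  proof (intro conjI allI impI ballI)
    fix i :: nat and a' :: int
    have agree: "\<forall>j<i. a j = seqs b i j" unfolding a_def using seqs_stable by metis
    have ai: "a i = chs b (seqs b i) i" unfolding a_def by simp
    have "V b (seqs b i) i (chs b (seqs b i) i) \<le> V b (seqs b i) i a'"
      unfolding chs_def by (rule someI_ex[OF ex_min_enat, rule_format])
    then have "V b a i (a i) \<le> V b a i a'"
      using V_cong[OF agree] ai by simp
    then show "(\<Sum>j<i. ordb b (a i - a j)) \<le> (\<Sum>j<i. ordb b (a' - a j))" unfolding V_def .
  qed simp
  then show ?thesis by blast
qed

lemma alpha_eq: "alpha S b k = (let a = (SOME a. is_b_ordering S b a) in V b a k (a k))"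
  unfolding alpha_def V_def by simp

lemma alpha_ge2: "b \<ge> 2 \<Longrightarrow> alpha UNIV b k = enat (Sk b k)"
proof -
  assume b: "b \<ge> 2"
  define a where "a = (SOME a. is_b_ordering UNIV b a)"
  have "is_b_ordering UNIV b a" unfolding a_def by (rule someI_ex[OF ordering_exists])
  then show ?thesis using ordering_inv[OF b] unfolding alpha_eq a_def[symmetric] Let_def by blast
qed

lemma alpha_0: "alpha UNIV 0 k = 0"
proof -
  define a where "a = (SOME a. is_b_ordering UNIV 0 a)"
  have ord: "is_b_ordering UNIV 0 a" unfolding a_def by (rule someI_ex[OF ordering_exists])
  have "V 0 a k (a k) = 0"
  proof (cases "k = 0")
    case True then show ?thesis by (simp add: V_def)
  next
    case False
    have "finite (a ` {..<k})" by simp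
    then obtain x :: int where x: "x \<notin> a ` {..<k}"
      using ex_new_if_finite[OF infinite_UNIV_int] by blast
    have "V 0 a k x = 0" unfolding V_def
      by (rule sum.neutral) (use x in \<open>auto intro!: ordb_0\<close>)
    moreover have "V 0 a k (a k) \<le> V 0 a k x"
      using ord False unfolding is_b_ordering_def V_def by auto
    ultimately show ?thesis by simp
  qed
  then show ?thesis unfolding alpha_eq a_def[symmetric] Let_def by simp
qed

lemma epow_fact: "epow b (alpha UNIV b k) = (if b \<ge> 2 then b ^ Sk b k else 1)"
proof -
  consider "b = 0" | "b = 1" | "b \<ge> 2" by linarith
  then show ?thesis
  proof cases
    case 1 then show ?thesis by (simp add: alpha_0 epow_def zero_enat_def)
  next
    case 2 then show ?thesis by (simp add: epow_def split: enat.split)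
  next
    case 3 then show ?thesis by (simp add: alpha_ge2 epow_def)
  qed
qed

lemma Sk_zero: "b \<ge> 2 \<Longrightarrow> b > k \<Longrightarrow> Sk b k = 0"
proof -
  assume b: "b \<ge> 2" and bk: "b > k"
  have "k div b^t = 0" if "t \<in> {1..k}" for t
  proof -
    have "b \<le> b^t" using that b by (simp add: self_le_power)
    then show ?thesis using bk by simp
  qed
  then show ?thesis unfolding Sk_def by simp
qed

lemma gen_fact_eq:
  assumes "k \<le> n"
  shows "gen_fact UNIV UNIV k = (\<Prod>b\<in>{2..n}. b ^ Sk b k)"
proof -
  have "gen_fact UNIV UNIV k = Prod_any (\<lambda>b. if b \<ge> 2 then b ^ Sk b k else 1)"
    unfolding gen_fact_def by (simp add: epow_fact)
  also have "\<dots> = (\<Prod>b\<in>{2..n}. if b \<ge> 2 then b ^ Sk b k else 1)"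
  proof (rule Prod_any.expand_superset)
    show "finite {2..n}" by simp
    show "{b. (if b \<ge> 2 then b ^ Sk b k else 1) \<noteq> 1} \<subseteq> {2..n}"
    proof
      fix b assume "b \<in> {b. (if b \<ge> 2 then b ^ Sk b k else 1) \<noteq> 1}"
      then have b: "b \<ge> 2" and ne: "b ^ Sk b k \<noteq> 1" by (auto split: if_splits)
      have "b \<le> n"
      proof (rule ccontr)
        assume "\<not> b \<le> n"
        then have "Sk b k = 0" using Sk_zero[OF b] assms by simp
        with ne show False by simp
      qed
      with b show "b \<in> {2..n}" by simp
    qed
  qed
  also have "\<dots> = (\<Prod>b\<in>{2..n}. b ^ Sk b k)" by (intro prod.cong) auto
  finally show ?thesis .
qed

lemma div_step: "n \<ge> 1 \<Longrightarrow> (m::nat) > 0 \<Longrightarrow> n div m = (n - 1) div m + (if m dvd n then 1 else 0)"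
proof -
  assume n: "n \<ge> 1" and m: "m > 0"
  then obtain k where k: "n = Suc k" by (cases n) auto
  show ?thesis unfolding k using div_Suc[of k m] by (simp add: dvd_eq_mod_eq_0)
qed

lemma Sk_step:
  assumes b: "b \<ge> 2" and n: "n \<ge> 1"
  shows "Sk b n = Sk b (n - 1) + the_enat (ordb b (int n))"
proof -
  have "Sk b (n - 1) = (\<Sum>t\<in>{1..n}. (n - 1) div b^t)" using Sk_ext[OF b, of "n-1" n] by simp
  moreover have "Sk b n = (\<Sum>t\<in>{1..n}. (n - 1) div b^t + (if b^t dvd n then 1 else 0))"
    unfolding Sk_def using b n by (intro sum.cong refl div_step) auto
  moreover have "the_enat (ordb b (int n)) = (\<Sum>t\<in>{1..n}. if b^t dvd n then 1 else 0)"
  proof -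
    have nz: "int n \<noteq> 0" using n by simp
    have "{t. 1 \<le> t \<and> (int b)^t dvd int n} = {t\<in>{1..n}. b^t dvd n}"
    proof -
      have "\<And>t. (int b)^t dvd int n \<longleftrightarrow> b^t dvd n" by (metis of_nat_dvd_iff of_nat_power)
      moreover have "\<And>t. (int b)^t dvd int n \<Longrightarrow> t \<le> n" using pow_bound[OF b nz] by fastforce
      ultimately show ?thesis by auto
    qed
    then show ?thesis using ordb_nz[OF b nz] card_filter_sum[of "{1..n}"] by simp
  qed
  ultimately show ?thesis by (simp add: sum.distrib)
qed

theorem theorem7p3:
  fixes n :: nat
  assumes "n \<ge> 1"
  shows "gen_int (UNIV :: int set) (UNIV :: nat set) n
           = of_nat (\<Prod>b = 2..n. b ^ the_enat (ordb b (int n)))"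
proof -
  define A where "A = (\<Prod>b\<in>{2..n}. b ^ Sk b (n - 1))"
  define C where "C = (\<Prod>b = 2..n. b ^ the_enat (ordb b (int n)))"
  have "gen_fact UNIV UNIV n = (\<Prod>b\<in>{2..n}. b ^ Sk b n)" by (rule gen_fact_eq) simp
  also have "\<dots> = (\<Prod>b\<in>{2..n}. b ^ Sk b (n - 1) * b ^ the_enat (ordb b (int n)))"
    using Sk_step assms by (intro prod.cong refl) (simp add: power_add)
  also have "\<dots> = A * C" unfolding A_def C_def by (rule prod.distrib)
  finally have gn: "gen_fact UNIV UNIV n = A * C" .
  have gn1: "gen_fact UNIV UNIV (n - 1) = A" unfolding A_def by (rule gen_fact_eq) simp
  have "A \<noteq> 0" unfolding A_def by (simp add: prod_zero_iff)
  then show ?thesis unfolding gen_int_def gn gn1 C_def[symmetric] by simp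
qed

end
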